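(* Let $\mathcal{P}\subseteq\mathbb{Z}_{\geq0}$ with $0\in\mathcal{P}$, working with formal power series over a commutative ring $R\supseteq\mathbb{Q}$. Then for every $n\ge0$, $$[z^n]\,P^\mathcal{P}(z) = [z^{n}]\,e_\mathcal{P}(z)^n e^z.$$
   Context: $[n]=\{1,\dots,n\}$; $[z^n]g$ is the coefficient of $z^n$. $e_\mathcal{P}(z)=\sum_{n\in\mathcal{P}}z^n/n!$ and $e^z=\sum_{n\ge0}z^n/n!$. $P^\mathcal{P}(z)=\sum_{n\ge0}p_nz^n/n!$, where $p_n$ is the number of partial functions $f$ on $[n]$ (maps from some subset $S\subseteq[n]$ into $[n]$) with $|f^{-1}(x)|\in\mathcal{P}$ for every $x\in[n]$. *)

theory Defs
  imports "HOL-Computational_Algebra.Formal_Power_Series"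
begin

text \<open>Partial functions on [n]: maps from a subset S of {1..n} into {1..n},
  represented as Isabelle maps nat \<Rightarrow> nat option (S = dom f).\<close>
definition partial_funs_on :: "nat \<Rightarrow> (nat \<Rightarrow> nat option) set" where
  "partial_funs_on n = {f. dom f \<subseteq> {1..n} \<and> ran f \<subseteq> {1..n}}"

definition p_count :: "nat set \<Rightarrow> nat \<Rightarrow> nat" where
  "p_count P n = card {f \<in> partial_funs_on n.
      \<forall>x \<in> {1..n}. card {y. f y = Some x} \<in> P}"

definition e_set :: "nat set \<Rightarrow> 'a :: field_char_0 fps" where
  "e_set P = Abs_fps (\<lambda>n. if n \<in> P then 1 / fact n else 0)"

definition PF_egf :: "nat set \<Rightarrow> 'a :: field_char_0 fps" where
  "PF_egf P = Abs_fps (\<lambda>n. of_nat (p_count P n) / fact n)"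

end

theory Submission
  imports Defs
begin

definition Fm :: "nat set \<Rightarrow> 'b set \<Rightarrow> 'c set \<Rightarrow> ('b \<Rightarrow> 'c option) set" where
  "Fm P S T = {f. dom f = S \<and> ran f \<subseteq> T \<and> (\<forall>x\<in>T. card {y. f y = Some x} \<in> P)}"

lemma sum_pow_card:
  fixes h :: "nat \<Rightarrow> 'a::comm_semiring_1"
  assumes "finite S"
  shows "(\<Sum>B\<in>Pow S. h (card B)) = (\<Sum>j=0..card S. of_nat (card S choose j) * h j)"
proof -
  have "(\<Sum>B\<in>Pow S. h (card B)) = (\<Sum>j=0..card S. \<Sum>B\<in>{B. B \<in> Pow S \<and> card B = j}. h (card B))"
    by (rule sum.group[symmetric]) (auto simp: assms card_mono)
  also have "\<dots> = (\<Sum>j=0..card S. of_nat (card S choose j) * h j)"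
  proof (rule sum.cong[OF refl])
    fix j
    have "(\<Sum>B\<in>{B. B \<in> Pow S \<and> card B = j}. h (card B)) = (\<Sum>B\<in>{B. B \<subseteq> S \<and> card B = j}. h j)"
      by (rule sum.cong) auto
    also have "\<dots> = of_nat (card S choose j) * h j"
      using n_subsets[OF assms, of j] by simp
    finally show "(\<Sum>B\<in>{B. B \<in> Pow S \<and> card B = j}. h (card B)) = of_nat (card S choose j) * h j" .
  qed
  finally show ?thesis .
qed

lemma Fm_empty: "Fm P S {} = (if S = {} then {Map.empty} else {})"
  by (auto simp: Fm_def ran_def dom_def)

lemma Fm_insert_bij:
  assumes "t \<notin> T"
  shows "bij_betw (\<lambda>f. ({y. f y = Some t}, \<lambda>y. if f y = Some t then None else f y))
     (Fm P S (insert t T)) (SIGMA B:{B. B \<subseteq> S \<and> card B \<in> P}. Fm P (S - B) T)"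
proof (rule bij_betw_byWitness[where f' = "\<lambda>(B, g). \<lambda>y. if y \<in> B then Some t else g y"])
  show "\<forall>a\<in>Fm P S (insert t T). (\<lambda>(B, g) y. if y \<in> B then Some t else g y)
          ({y. a y = Some t}, \<lambda>y. if a y = Some t then None else a y) = a"
    by auto
  show "\<forall>a'\<in>(SIGMA B:{B. B \<subseteq> S \<and> card B \<in> P}. Fm P (S - B) T).
          (\<lambda>f. ({y. f y = Some t}, \<lambda>y. if f y = Some t then None else f y))
            ((\<lambda>(B, g) y. if y \<in> B then Some t else g y) a') = a'"
  proof
    fix a' assume a': "a' \<in> (SIGMA B:{B. B \<subseteq> S \<and> card B \<in> P}. Fm P (S - B) T)"
    obtain B g where ab: "a' = (B, g)" by (cases a')
    have g1: "\<And>y. g y \<noteq> Some t" using a' assms ab by (auto simp: Fm_def ran_def)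
    have g2: "\<And>y. y \<in> B \<Longrightarrow> g y = None" using a' ab by (auto simp: Fm_def dom_def)
    have "{y. (if y \<in> B then Some t else g y) = Some t} = B" using g1 by auto
    moreover have "(\<lambda>y. if (if y \<in> B then Some t else g y) = Some t then None else (if y \<in> B then Some t else g y)) = g"
      using g1 g2 by (auto simp: fun_eq_iff)
    ultimately show "(\<lambda>f. ({y. f y = Some t}, \<lambda>y. if f y = Some t then None else f y))
            ((\<lambda>(B, g) y. if y \<in> B then Some t else g y) a') = a'" unfolding ab prod.case by simp
  qed
  show "(\<lambda>f. ({y. f y = Some t}, \<lambda>y. if f y = Some t then None else f y)) ` Fm P S (insert t T)
        \<subseteq> (SIGMA B:{B. B \<subseteq> S \<and> card B \<in> P}. Fm P (S - B) T)"
  proof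
    fix x assume "x \<in> (\<lambda>f. ({y. f y = Some t}, \<lambda>y. if f y = Some t then None else f y)) ` Fm P S (insert t T)"
    then obtain f where f: "f \<in> Fm P S (insert t T)" and x: "x = ({y. f y = Some t}, \<lambda>y. if f y = Some t then None else f y)" by auto
    have "{y. f y = Some t} \<subseteq> S" using f by (auto simp: Fm_def)
    moreover have "card {y. f y = Some t} \<in> P" using f by (auto simp: Fm_def)
    moreover have "(\<lambda>y. if f y = Some t then None else f y) \<in> Fm P (S - {y. f y = Some t}) T"
    proof -
      have "\<And>u. u \<in> T \<Longrightarrow> {y. (if f y = Some t then None else f y) = Some u} = {y. f y = Some u}"
        using assms by auto
      with f show ?thesis unfolding Fm_def ran_def dom_def by (auto split: if_splits)
    qed
    ultimately show "x \<in> (SIGMA B:{B. B \<subseteq> S \<and> card B \<in> P}. Fm P (S - B) T)" using x by auto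
  qed
  show "(\<lambda>(B, g) y. if y \<in> B then Some t else g y) ` (SIGMA B:{B. B \<subseteq> S \<and> card B \<in> P}. Fm P (S - B) T)
        \<subseteq> Fm P S (insert t T)"
  proof
    fix x assume "x \<in> (\<lambda>(B, g) y. if y \<in> B then Some t else g y) ` (SIGMA B:{B. B \<subseteq> S \<and> card B \<in> P}. Fm P (S - B) T)"
    then obtain B g where B: "B \<subseteq> S" "card B \<in> P" and g: "g \<in> Fm P (S - B) T"
      and x: "x = (\<lambda>y. if y \<in> B then Some t else g y)" by auto
    have g1: "\<And>y. g y \<noteq> Some t" using g assms by (auto simp: Fm_def ran_def)
    have g2: "\<And>y. y \<in> B \<Longrightarrow> g y = None" using g by (auto simp: Fm_def dom_def)
    have "{y. x y = Some t} = B" using g1 x by auto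
    moreover have "\<And>u. u \<in> T \<Longrightarrow> {y. x y = Some u} = {y. g y = Some u}"
      using g2 x assms by auto
    moreover have "dom x = S" using g B x by (auto simp: Fm_def dom_def)
    moreover have "ran x \<subseteq> insert t T" using g x by (auto simp: Fm_def ran_def)
    ultimately show "x \<in> Fm P S (insert t T)" using g B unfolding Fm_def by auto
  qed
qed


lemma Fm_count:
  assumes "finite T"
  shows "finite S \<Longrightarrow> finite (Fm P S T) \<and>
    (of_nat (card (Fm P S T)) :: 'a::field_char_0) = fact (card S) * (fps_nth (e_set P ^ card T) (card S))"
  using assms
proof (induction T arbitrary: S rule: finite_induct)
  case empty
  then show ?case by (auto simp: Fm_empty)
next
  case (insert t T)
  let ?I = "{B. B \<subseteq> S \<and> card B \<in> P}"
  have bij: "bij_betw (\<lambda>f. ({y. f y = Some t}, \<lambda>y. if f y = Some t then None else f y))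
     (Fm P S (insert t T)) (SIGMA B:?I. Fm P (S - B) T)"
    by (rule Fm_insert_bij) fact
  have finI: "finite ?I" using insert.prems by auto
  have finB: "\<forall>B\<in>?I. finite (Fm P (S - B) T)" using insert.IH insert.prems by auto
  have finSig: "finite (SIGMA B:?I. Fm P (S - B) T)" using finI finB by auto
  have fin: "finite (Fm P S (insert t T))" using bij_betw_finite[OF bij] finSig by simp
  have "(of_nat (card (Fm P S (insert t T))) :: 'a) = of_nat (card (SIGMA B:?I. Fm P (S - B) T))"
    using bij_betw_same_card[OF bij] by simp
  also have "\<dots> = (\<Sum>B\<in>?I. of_nat (card (Fm P (S - B) T)))"
    using finI finB by simp
  also have "\<dots> = (\<Sum>B\<in>?I. fact (card S - card B) * (fps_nth (e_set P ^ card T) (card S - card B)))"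
  proof (rule sum.cong[OF refl])
    fix B assume "B \<in> ?I"
    then have "B \<subseteq> S" by auto
    then have "card (S - B) = card S - card B" using insert.prems finite_subset card_Diff_subset by metis
    then show "(of_nat (card (Fm P (S - B) T)) :: 'a) = fact (card S - card B) * (fps_nth (e_set P ^ card T) (card S - card B))"
      using insert.IH[of "S - B"] insert.prems by simp
  qed
  also have "\<dots> = (\<Sum>B\<in>Pow S. (\<lambda>j. if j \<in> P then fact (card S - j) * (fps_nth (e_set P ^ card T) (card S - j)) else (0::'a)) (card B))"
  proof -
    have I_eq: "?I = {B \<in> Pow S. card B \<in> P}" by auto
    show ?thesis unfolding I_eq
      by (rule sum.inter_filter) (use insert.prems in simp)
  qed
  also have "\<dots> = (\<Sum>j=0..card S. of_nat (card S choose j) * (if j \<in> P then fact (card S - j) * (fps_nth (e_set P ^ card T) (card S - j)) else 0))"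
    by (rule sum_pow_card) fact
  also have "\<dots> = (\<Sum>j=0..card S. fact (card S) * ((fps_nth (e_set P :: 'a fps) j) * (fps_nth (e_set P ^ card T) (card S - j))))"
  proof (rule sum.cong[OF refl])
    fix j assume "j \<in> {0..card S}"
    then have j: "j \<le> card S" by auto
    have "(of_nat (card S choose j) :: 'a) * fact (card S - j) = fact (card S) / fact j"
      using binomial_fact[OF j, where 'a='a] by (simp add: field_simps)
    then show "(of_nat (card S choose j) :: 'a) * (if j \<in> P then fact (card S - j) * (fps_nth (e_set P ^ card T) (card S - j)) else 0)
       = fact (card S) * ((fps_nth (e_set P :: 'a fps) j) * (fps_nth (e_set P ^ card T) (card S - j)))"
      by (simp add: e_set_def field_simps)
  qed
  also have "\<dots> = fact (card S) * (fps_nth (e_set P ^ card (insert t T)) (card S))"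
    using insert.hyps by (simp add: fps_mult_nth sum_distrib_left)
  finally show ?case using fin by simp
qed

lemma p_count_sum:
  "(of_nat (p_count P n) :: 'a::field_char_0) = (\<Sum>j=0..n. of_nat (n choose j) * fact j * (fps_nth (e_set P ^ n) j))"
proof -
  have eq: "{f \<in> partial_funs_on n. \<forall>x \<in> {1..n}. card {y. f y = Some x} \<in> P}
      = (\<Union>S\<in>Pow {1..n}. Fm P S {1..n})"
    by (auto simp: partial_funs_on_def Fm_def)
  have fin: "\<forall>S\<in>Pow {1..n}. finite (Fm P S {1..n})"
    using Fm_count[of "{1..n}"] by (meson PowD finite_atLeastAtMost finite_subset)
  have "card (\<Union>S\<in>Pow {1..n}. Fm P S {1..n}) = (\<Sum>S\<in>Pow {1..n}. card (Fm P S {1..n}))"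
    by (rule card_UN_disjoint) (use fin in \<open>auto simp: Fm_def\<close>)
  moreover have "p_count P n = card (\<Union>S\<in>Pow {1..n}. Fm P S {1..n})"
    unfolding p_count_def eq ..
  ultimately have "(of_nat (p_count P n) :: 'a) = (\<Sum>S\<in>Pow {1..n}. of_nat (card (Fm P S {1..n})))"
    by simp
  also have "\<dots> = (\<Sum>S\<in>Pow {1..n}. (\<lambda>j. fact j * (fps_nth (e_set P ^ n) j)) (card S))"
  proof (rule sum.cong[OF refl])
    fix S assume "S \<in> Pow {1..n}"
    then have "finite S" by (meson PowD finite_atLeastAtMost finite_subset)
    then show "(of_nat (card (Fm P S {1..n})) :: 'a) = (\<lambda>j. fact j * (fps_nth (e_set P ^ n) j)) (card S)"
      using Fm_count[of "{1..n}" S P, where 'a='a] by simp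
  qed
  also have "\<dots> = (\<Sum>j=0..n. of_nat (n choose j) * (fact j * (fps_nth (e_set P ^ n) j)))"
    using sum_pow_card[of "{1..n}" "\<lambda>j. fact j * (fps_nth (e_set P ^ n) j)"] by simp
  finally show ?thesis by (simp add: mult.assoc)
qed

theorem corollary5p13:
  fixes P :: "nat set" and n :: nat
  assumes "0 \<in> P"
  shows "fps_nth (PF_egf P :: 'a :: field_char_0 fps) n
           = fps_nth (e_set P ^ n * fps_exp 1) n"
proof -
  have "fps_nth (PF_egf P :: 'a fps) n = (\<Sum>j=0..n. of_nat (n choose j) * fact j * (fps_nth (e_set P ^ n) j)) / fact n"
    by (simp add: PF_egf_def p_count_sum)
  also have "\<dots> = (\<Sum>j=0..n. (fps_nth (e_set P ^ n) j) * (1 / fact (n - j)))"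
    unfolding sum_divide_distrib
  proof (rule sum.cong[OF refl])
    fix j assume "j \<in> {0..n}"
    then have j: "j \<le> n" by auto
    have "(of_nat (n choose j) :: 'a) * fact j = fact n / fact (n - j)"
      using binomial_fact[OF j, where 'a='a] by (simp add: field_simps)
    then show "(of_nat (n choose j) :: 'a) * fact j * (fps_nth (e_set P ^ n) j) / fact n = (fps_nth (e_set P ^ n) j) * (1 / fact (n - j))"
      by (simp add: field_simps)
  qed
  also have "\<dots> = fps_nth (e_set P ^ n * fps_exp 1) n"
    by (simp add: fps_mult_nth)
  finally show ?thesis .
qed

end
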